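(* Let $\tau:\mathscr{A}\to\mathbb{C}$ be a linear functional with $|\tau(q)|\le C_0^{\deg q}$ for every monomial $q$, and let $A>1$ with $C_0/A<1/2$. For $g\in\mathscr{A}_0$ put $Q_m(\Sigma g)=Q_m(\Sigma g,\dots,\Sigma g)$. Then for all $f,g\in\mathscr{A}_0$, $$\|Q_m(\Sigma g)-Q_m(\Sigma f)\|_A\le2(2A^{-2})^m\sum_{k=0}^{m-1}\|g\|_A^k\|f\|_A^{m-k-1}\|f-g\|_A.$$ In particular $\|Q_m(\Sigma g)\|_A\le2(2A^{-2})^m\|g\|_A^m$.
   Context: $\mathscr{A}=\mathbb{C}\langle X_1,\dots,X_n\rangle$, $\mathscr{A}_0$ the span of monomials of degree $\ge1$; $\|P\|_A=\sum_q|\lambda_q(P)|A^{\deg q}$ for $P=\sum_q\lambda_q(P)q$. $\Sigma q=q/\deg q$ on monomials of degree $\ge1$. $\partial_j$: derivation with $\partial_jX_i=\delta_{ij}1\otimes1$; $\mathscr{D}_jq=\sum_{q=BX_jC}CB$; $\mathscr{J}\mathscr{D}g=(\partial_j\mathscr{D}_ig)_{i,j}$, with products in $M_n(\mathscr{A}\otimes\mathscr{A}^{op})$ using $(a\otimes b)(c\otimes d)=ac\otimes db$. $Q_m(g_1,\dots,g_m)=(1\otimes\tau+\tau\otimes1)\{\sum_i[(\mathscr{J}\mathscr{D}g_1)\cdots(\mathscr{J}\mathscr{D}g_m)]_{ii}\}$, where $(1\otimes\tau+\tau\otimes1)(a\otimes b)=a\tau(b)+\tau(a)b$. *)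

theory Defs
  imports Complex_Main
begin

text \<open>Noncommutative polynomials in X_0,...,X_{n-1}: a monomial is a word (nat list),
a polynomial is its coefficient function (finitely supported). Elements of the
algebraic tensor product A \<otimes> A are coefficient functions on pairs of words.\<close>

type_synonym ncpoly = "nat list \<Rightarrow> complex"
type_synonym ncpoly2 = "nat list \<times> nat list \<Rightarrow> complex"

definition supp :: "('a \<Rightarrow> complex) \<Rightarrow> 'a set" where
  "supp P = {q. P q \<noteq> 0}"

definition is_ncpoly :: "nat \<Rightarrow> ncpoly \<Rightarrow> bool" where
  "is_ncpoly n P \<longleftrightarrow> finite (supp P) \<and> (\<forall>q\<in>supp P. set q \<subseteq> {..<n})"

definition is_ncpoly0 :: "nat \<Rightarrow> ncpoly \<Rightarrow> bool" where
  "is_ncpoly0 n P \<longleftrightarrow> is_ncpoly n P \<and> P [] = 0"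

definition normA :: "real \<Rightarrow> ncpoly \<Rightarrow> real" where
  "normA A P = (\<Sum>q\<in>supp P. cmod (P q) * A ^ length q)"

definition Sigma_op :: "ncpoly \<Rightarrow> ncpoly" where
  "Sigma_op P q = (if q = [] then 0 else P q / of_nat (length q))"

text \<open>Cyclic derivative: D_j q = sum over q = B X_j C of C B.\<close>
definition cycD :: "nat \<Rightarrow> ncpoly \<Rightarrow> ncpoly" where
  "cycD j P w = (\<Sum>i\<le>length w. P (drop i w @ j # take i w))"

text \<open>Free difference quotient: d_j q = sum over q = B X_j C of B \<otimes> C.\<close>
definition ddiff :: "nat \<Rightarrow> ncpoly \<Rightarrow> ncpoly2" where
  "ddiff j P = (\<lambda>(u, v). P (u @ j # v))"

text \<open>Product in A \<otimes> A^op: (a \<otimes> b)(c \<otimes> d) = ac \<otimes> db.\<close>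
definition tmult :: "ncpoly2 \<Rightarrow> ncpoly2 \<Rightarrow> ncpoly2" where
  "tmult X Y = (\<lambda>(w1, w2). \<Sum>i\<le>length w1. \<Sum>j\<le>length w2.
      X (take i w1, drop j w2) * Y (drop i w1, take j w2))"

definition tone :: ncpoly2 where
  "tone = (\<lambda>(u, v). if u = [] \<and> v = [] then 1 else 0)"

text \<open>n x n matrices over A \<otimes> A^op (entries with indices < n are relevant).\<close>
type_synonym tmat = "nat \<Rightarrow> nat \<Rightarrow> ncpoly2"

definition mat_mult :: "nat \<Rightarrow> tmat \<Rightarrow> tmat \<Rightarrow> tmat" where
  "mat_mult n M N = (\<lambda>i k. \<lambda>x. \<Sum>j<n. tmult (M i j) (N j k) x)"

definition mat_one :: tmat where
  "mat_one = (\<lambda>i k. if i = k then tone else (\<lambda>_. 0))"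

definition JD :: "nat \<Rightarrow> ncpoly \<Rightarrow> tmat" where
  "JD n g = (\<lambda>i j. ddiff j (cycD i g))"

text \<open>tau given by its values on monomials, extended linearly.\<close>
definition one_tau_tau_one :: "(nat list \<Rightarrow> complex) \<Rightarrow> ncpoly2 \<Rightarrow> ncpoly" where
  "one_tau_tau_one tau T w =
     (\<Sum>v\<in>{v. T (w, v) \<noteq> 0}. T (w, v) * tau v) +
     (\<Sum>u\<in>{u. T (u, w) \<noteq> 0}. tau u * T (u, w))"

definition Qm :: "nat \<Rightarrow> (nat list \<Rightarrow> complex) \<Rightarrow> ncpoly list \<Rightarrow> ncpoly" where
  "Qm n tau gs = one_tau_tau_one tau
     (\<lambda>x. \<Sum>i<n. foldr (mat_mult n) (map (JD n) gs) mat_one i i x)"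

end

theory Submission
  imports Defs "HOL-Analysis.Analysis"
begin

abbreviation II :: "('a \<Rightarrow> ennreal) \<Rightarrow> ennreal" where
  "II f \<equiv> (\<integral>\<^sup>+x. f x \<partial>count_space UNIV)"

lemma II_mono: "(\<And>x. f x \<le> g x) \<Longrightarrow> II f \<le> II g"
  by (rule nn_integral_mono) auto

lemma II_add: "II (\<lambda>x. f x + g x) = II f + II g"
  by (rule nn_integral_add) auto

lemma II_sum: "II (\<lambda>x. \<Sum>i\<in>P. f i x) = (\<Sum>i\<in>P. II (f i))"
  by (rule nn_integral_sum) auto

lemma II_cmult: "II (\<lambda>x. c * f x) = c * II f"
  by (rule nn_integral_cmult) auto

lemma II_finite: "finite S \<Longrightarrow> (\<And>x. x \<notin> S \<Longrightarrow> f x = 0) \<Longrightarrow> II f = (\<Sum>x\<in>S. f x)"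
  by (rule nn_integral_count_space') auto

lemma II_pair: "II (\<lambda>x. II (\<lambda>y. f (x, y))) = II f"
  by (rule nn_integral_fst_count_space)

lemma II_pair2: "II (\<lambda>y. II (\<lambda>x. f (x, y))) = II f"
  by (rule nn_integral_snd_count_space)

definition wt :: "real \<Rightarrow> real \<Rightarrow> nat list \<times> nat list \<Rightarrow> real" where
  "wt a c p = a ^ length (fst p) * c ^ length (snd p)"

definition wN :: "real \<Rightarrow> real \<Rightarrow> ncpoly2 \<Rightarrow> ennreal" where
  "wN a c T = II (\<lambda>p. ennreal (cmod (T p) * wt a c p))"

lemma wt_nonneg: "a \<ge> 0 \<Longrightarrow> c \<ge> 0 \<Longrightarrow> wt a c p \<ge> 0"
  by (simp add: wt_def)

lemma wN_sum:
  assumes "a \<ge> 0" "c \<ge> 0"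
  shows "wN a c (\<lambda>x. \<Sum>j\<in>J. F j x) \<le> (\<Sum>j\<in>J. wN a c (F j))"
proof -
  have "wN a c (\<lambda>x. \<Sum>j\<in>J. F j x) \<le> II (\<lambda>p. \<Sum>j\<in>J. ennreal (cmod (F j p) * wt a c p))"
    unfolding wN_def
  proof (rule II_mono)
    fix p
    have "cmod (\<Sum>j\<in>J. F j p) * wt a c p \<le> (\<Sum>j\<in>J. cmod (F j p)) * wt a c p"
      by (rule mult_right_mono[OF norm_sum wt_nonneg[OF assms]])
    also have "\<dots> = (\<Sum>j\<in>J. cmod (F j p) * wt a c p)" by (simp add: sum_distrib_right)
    finally have "ennreal (cmod (\<Sum>j\<in>J. F j p) * wt a c p) \<le> ennreal (\<Sum>j\<in>J. cmod (F j p) * wt a c p)"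
      by (rule ennreal_leI)
    also have "\<dots> = (\<Sum>j\<in>J. ennreal (cmod (F j p) * wt a c p))"
      by (rule sum_ennreal[symmetric]) (simp add: wt_nonneg[OF assms])
    finally show "ennreal (cmod (\<Sum>j\<in>J. F j p) * wt a c p) \<le> (\<Sum>j\<in>J. ennreal (cmod (F j p) * wt a c p))" .
  qed
  also have "\<dots> = (\<Sum>j\<in>J. wN a c (F j))" unfolding wN_def by (rule II_sum)
  finally show ?thesis .
qed

lemma wN_add:
  assumes "a \<ge> 0" "c \<ge> 0"
  shows "wN a c (\<lambda>x. X x + Y x) \<le> wN a c X + wN a c Y"
  using wN_sum[OF assms, of "\<lambda>b. if b then X else Y" UNIV] by (simp add: UNIV_bool add.commute)

lemma wN_minus: "wN a c (\<lambda>x. - X x) = wN a c X"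
  by (simp add: wN_def)

lemma tmult_ptwise:
  assumes "a \<ge> 0" "c \<ge> 0"
  shows "ennreal (cmod (tmult X Y (w1, w2)) * wt a c (w1, w2)) \<le>
    (\<Sum>i\<le>length w1. \<Sum>j\<le>length w2.
       ennreal (cmod (X (take i w1, drop j w2)) * wt a c (take i w1, drop j w2)) *
       ennreal (cmod (Y (drop i w1, take j w2)) * wt a c (drop i w1, take j w2)))"
proof -
  have wsplit: "wt a c (w1, w2) = wt a c (take i w1, drop j w2) * wt a c (drop i w1, take j w2)"
    if "i \<le> length w1" "j \<le> length w2" for i j
  proof -
    have "a ^ length w1 = a ^ i * a ^ (length w1 - i)" using that by (simp flip: power_add)
    moreover have "c ^ length w2 = c ^ (length w2 - j) * c ^ j" using that by (simp flip: power_add)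
    ultimately show ?thesis using that by (simp add: wt_def min_def)
  qed
  have "cmod (tmult X Y (w1, w2)) * wt a c (w1, w2) \<le>
     (\<Sum>i\<le>length w1. \<Sum>j\<le>length w2. cmod (X (take i w1, drop j w2)) * cmod (Y (drop i w1, take j w2))) * wt a c (w1, w2)"
    unfolding tmult_def
    apply (rule mult_right_mono[OF _ wt_nonneg[OF assms]])
    apply simp
    apply (rule order_trans[OF norm_sum])
    apply (rule sum_mono)
    apply (rule order_trans[OF norm_sum])
    by (simp add: norm_mult)
  also have "\<dots> = (\<Sum>i\<le>length w1. \<Sum>j\<le>length w2.
       (cmod (X (take i w1, drop j w2)) * wt a c (take i w1, drop j w2)) *
       (cmod (Y (drop i w1, take j w2)) * wt a c (drop i w1, take j w2)))"
    unfolding sum_distrib_right by (intro sum.cong refl) (simp add: wsplit mult_ac)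
  finally have "ennreal (cmod (tmult X Y (w1, w2)) * wt a c (w1, w2)) \<le> ennreal \<dots>"
    by (rule ennreal_leI)
  also have "\<dots> = (\<Sum>i\<le>length w1. \<Sum>j\<le>length w2.
       ennreal (cmod (X (take i w1, drop j w2)) * wt a c (take i w1, drop j w2)) *
       ennreal (cmod (Y (drop i w1, take j w2)) * wt a c (drop i w1, take j w2)))"
    apply (subst sum_ennreal[symmetric])
     apply (force intro!: sum_nonneg mult_nonneg_nonneg wt_nonneg assms)
    apply (intro sum.cong refl)
    apply (subst sum_ennreal[symmetric])
     apply (force intro!: sum_nonneg mult_nonneg_nonneg wt_nonneg assms)
    apply (intro sum.cong refl)
    apply (rule ennreal_mult)
    by (force intro!: sum_nonneg mult_nonneg_nonneg wt_nonneg assms)+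
  finally show ?thesis .
qed

lemma bij_split:
  "bij_betw (\<lambda>((u1,v1),(u2,v2)). ((u1 @ u2, v2 @ v1), (length u1, length v2))) UNIV
     {(W, ij). fst ij \<le> length (fst W) \<and> snd ij \<le> length (snd W)}"
proof (rule bij_betwI[where g="\<lambda>((w1,w2),(i,j)). ((take i w1, drop j w2), (drop i w1, take j w2))"])
qed (auto split: prod.splits)

lemma wN_tmult:
  assumes "a \<ge> 0" "c \<ge> 0"
  shows "wN a c (tmult X Y) \<le> wN a c X * wN a c Y"
proof -
  define fX where "fX p = ennreal (cmod (X p) * wt a c p)" for p
  define fY where "fY p = ennreal (cmod (Y p) * wt a c p)" for p
  define G where "G = (\<lambda>(W::nat list \<times> nat list, ij::nat\<times>nat). fX (take (fst ij) (fst W), drop (snd ij) (snd W)) *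
        fY (drop (fst ij) (fst W), take (snd ij) (snd W)))"
  define Dom where "Dom = {(W::nat list \<times> nat list, ij::nat\<times>nat). fst ij \<le> length (fst W) \<and> snd ij \<le> length (snd W)}"
  have "wN a c (tmult X Y) \<le> II (\<lambda>W. II (\<lambda>ij. G (W, ij) * indicator Dom (W, ij)))"
    unfolding wN_def
  proof (rule II_mono)
    fix W :: "nat list \<times> nat list"
    obtain w1 w2 where W: "W = (w1, w2)" by fastforce
    have "II (\<lambda>ij. G (W, ij) * indicator Dom (W, ij)) = (\<Sum>ij\<in>{..length w1}\<times>{..length w2}. G (W, ij) * indicator Dom (W, ij))"
      by (rule II_finite) (auto simp: Dom_def W indicator_def split: if_splits)
    also have "\<dots> = (\<Sum>i\<le>length w1. \<Sum>j\<le>length w2. G (W, (i,j)))"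
      unfolding sum.cartesian_product by (rule sum.cong) (auto simp: Dom_def W indicator_def)
    finally show "ennreal (cmod (tmult X Y W) * wt a c W) \<le> II (\<lambda>ij. G (W, ij) * indicator Dom (W, ij))"
      using tmult_ptwise[OF assms, of X Y w1 w2] by (simp add: W G_def fX_def fY_def)
  qed
  also have "\<dots> = II (\<lambda>z. G z * indicator Dom z)"
    by (rule II_pair)
  also have "\<dots> = (\<integral>\<^sup>+z. G z \<partial>count_space Dom)"
    by (simp add: nn_integral_count_space_indicator)
  also have "\<dots> = II (\<lambda>z. G ((\<lambda>((u1,v1),(u2,v2)). ((u1 @ u2, v2 @ v1), (length u1, length v2))) z))"
    by (rule nn_integral_bij_count_space[symmetric]) (use bij_split in \<open>simp add: Dom_def\<close>)
  also have "\<dots> = II (\<lambda>z. fX (fst z) * fY (snd z))"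
    by (rule arg_cong[where f=II]) (auto simp: G_def fun_eq_iff split: prod.splits)
  also have "\<dots> = II (\<lambda>x. II (\<lambda>y. fX x * fY y))"
    using II_pair[of "\<lambda>z. fX (fst z) * fY (snd z)"] by simp
  also have "\<dots> = II (\<lambda>x. fX x * II fY)"
    by (simp add: II_cmult)
  also have "\<dots> = II fX * II fY"
    using II_cmult[of "II fY" fX] by (simp add: mult.commute)
  finally show ?thesis by (simp add: wN_def fX_def fY_def)
qed

definition SN :: "nat \<Rightarrow> real \<Rightarrow> real \<Rightarrow> tmat \<Rightarrow> ennreal" where
  "SN n a c M = (\<Sum>i<n. \<Sum>k<n. wN a c (M i k))"

lemma SN_mult:
  assumes "a \<ge> 0" "c \<ge> 0"
  shows "SN n a c (mat_mult n M N) \<le> SN n a c M * SN n a c N"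
proof -
  have eqN: "(\<Sum>k<n. \<Sum>j'<n. wN a c (N j' k)) = SN n a c N"
    unfolding SN_def by (rule sum.swap)
  have "SN n a c (mat_mult n M N) \<le> (\<Sum>i<n. \<Sum>k<n. \<Sum>j<n. wN a c (M i j) * wN a c (N j k))"
    unfolding SN_def mat_mult_def
    by (intro sum_mono order_trans[OF wN_sum[OF assms]] wN_tmult[OF assms])
  also have "\<dots> \<le> (\<Sum>i<n. \<Sum>k<n. \<Sum>j<n. wN a c (M i j) * (\<Sum>j'<n. wN a c (N j' k)))"
    by (intro sum_mono mult_left_mono) (auto intro: member_le_sum)
  also have "\<dots> = (\<Sum>i<n. \<Sum>j<n. \<Sum>k<n. wN a c (M i j) * (\<Sum>j'<n. wN a c (N j' k)))"
    by (rule sum.cong[OF refl], rule sum.swap)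
  also have "\<dots> = (\<Sum>i<n. \<Sum>j<n. wN a c (M i j) * (\<Sum>k<n. \<Sum>j'<n. wN a c (N j' k)))"
    by (simp add: sum_distrib_left)
  also have "\<dots> = (\<Sum>i<n. \<Sum>j<n. wN a c (M i j)) * (\<Sum>k<n. \<Sum>j'<n. wN a c (N j' k))"
    by (simp add: sum_distrib_right)
  finally show ?thesis by (simp add: SN_def eqN)
qed

lemma SN_add:
  assumes "a \<ge> 0" "c \<ge> 0"
  shows "SN n a c (\<lambda>i k x. M i k x + N i k x) \<le> SN n a c M + SN n a c N"
  unfolding SN_def by (simp add: sum.distrib[symmetric] sum_mono wN_add[OF assms])

lemma SN_cong: "(\<And>i k x. i < n \<Longrightarrow> k < n \<Longrightarrow> M i k x = N i k x) \<Longrightarrow> SN n a c M = SN n a c N"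
proof -
  assume h: "\<And>i k x. i < n \<Longrightarrow> k < n \<Longrightarrow> M i k x = N i k x"
  have "\<And>i k. i < n \<Longrightarrow> k < n \<Longrightarrow> M i k = N i k" using h by (simp add: fun_eq_iff)
  then show ?thesis unfolding SN_def by simp
qed

lemma tmult_tone: "tmult X tone = X"
proof (rule ext, clarify)
  fix w1 w2 :: "nat list"
  have "tmult X tone (w1, w2) = (\<Sum>i\<le>length w1. \<Sum>j\<le>length w2.
      (if i = length w1 \<and> j = 0 then X (w1, w2) else 0))"
    unfolding tmult_def tone_def
    apply simp
    apply (rule sum.cong[OF refl])
    apply (rule sum.cong[OF refl])
    by auto
  also have "\<dots> = X (w1, w2)"
  proof -
    have "\<And>i. (\<Sum>j\<le>length w2. if i = length w1 \<and> j = 0 then X (w1,w2) else 0) = (if i = length w1 then X (w1,w2) else 0)"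
      by (case_tac "i = length w1") (simp_all add: sum.delta)
    then show ?thesis by (simp add: sum.delta)
  qed
  finally show "tmult X tone (w1, w2) = X (w1, w2)" .
qed

lemma tmult_zero: "tmult X (\<lambda>_. 0) = (\<lambda>_. 0)"
  by (auto simp: tmult_def fun_eq_iff)

lemma mat_mult_one: "k < n \<Longrightarrow> mat_mult n M mat_one i k x = M i k x"
proof -
  assume k: "k < n"
  have "mat_mult n M mat_one i k x = (\<Sum>j<n. if j = k then tmult (M i j) tone x else 0)"
    unfolding mat_mult_def mat_one_def by (intro sum.cong refl) (simp add: tmult_zero)
  also have "\<dots> = M i k x" using k by (simp add: tmult_tone)
  finally show ?thesis .
qed

lemma tmult_diff: "tmult X Y x - tmult X' Y' x = tmult X (\<lambda>z. Y z - Y' z) x + tmult (\<lambda>z. X z - X' z) Y' x"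
  unfolding tmult_def by (simp split: prod.splits add: sum_subtractf[symmetric] sum.distrib[symmetric] algebra_simps)

lemma mat_mult_diff: "mat_mult n M N i k x - mat_mult n M' N' i k x =
   mat_mult n M (\<lambda>i k z. N i k z - N' i k z) i k x + mat_mult n (\<lambda>i k z. M i k z - M' i k z) N' i k x"
  unfolding mat_mult_def by (simp add: sum_subtractf[symmetric] sum.distrib[symmetric] tmult_diff)

lemma SN_nonneg: "SN n a c M \<ge> 0" by simp

lemma SN_prod_rep:
  assumes "a \<ge> 0" "c \<ge> 0" "SN n a c G \<le> \<alpha>"
  shows "SN n a c (foldr (mat_mult n) (replicate (Suc k) G) mat_one) \<le> \<alpha> ^ Suc k"
proof (induction k)
  case 0
  have "SN n a c (foldr (mat_mult n) (replicate (Suc 0) G) mat_one) = SN n a c G"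
    by (simp, rule SN_cong, simp add: mat_mult_one)
  then show ?case using assms by simp
next
  case (Suc k)
  have "SN n a c (foldr (mat_mult n) (replicate (Suc (Suc k)) G) mat_one)
      = SN n a c (mat_mult n G (foldr (mat_mult n) (replicate (Suc k) G) mat_one))" by simp
  also have "\<dots> \<le> SN n a c G * SN n a c (foldr (mat_mult n) (replicate (Suc k) G) mat_one)"
    by (rule SN_mult[OF assms(1,2)])
  also have "\<dots> \<le> \<alpha> * \<alpha> ^ Suc k"
    by (rule mult_mono[OF assms(3) Suc.IH]) auto
  finally show ?case by simp
qed

lemma SN_diff_rep:
  assumes a: "a \<ge> 0" "c \<ge> 0" and G: "SN n a c G \<le> \<alpha>" and F: "SN n a c F \<le> \<beta>"
    and D: "SN n a c (\<lambda>i k x. G i k x - F i k x) \<le> \<delta>"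
  shows "SN n a c (\<lambda>i j x. foldr (mat_mult n) (replicate (Suc k) G) mat_one i j x
                         - foldr (mat_mult n) (replicate (Suc k) F) mat_one i j x)
      \<le> (\<Sum>l<Suc k. \<alpha> ^ l * \<beta> ^ (Suc k - l - 1) * \<delta>)"
proof (induction k)
  case 0
  have "SN n a c (\<lambda>i j x. foldr (mat_mult n) (replicate (Suc 0) G) mat_one i j x
                         - foldr (mat_mult n) (replicate (Suc 0) F) mat_one i j x)
      = SN n a c (\<lambda>i k x. G i k x - F i k x)"
    by (simp, rule SN_cong, simp add: mat_mult_one)
  then show ?case using D by simp
next
  case (Suc k)
  define PG where "PG = foldr (mat_mult n) (replicate (Suc k) G) mat_one"
  define PF where "PF = foldr (mat_mult n) (replicate (Suc k) F) mat_one"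
  have "SN n a c (\<lambda>i j x. foldr (mat_mult n) (replicate (Suc (Suc k)) G) mat_one i j x
                         - foldr (mat_mult n) (replicate (Suc (Suc k)) F) mat_one i j x)
      = SN n a c (\<lambda>i j x. mat_mult n G (\<lambda>i k z. PG i k z - PF i k z) i j x
                          + mat_mult n (\<lambda>i k z. G i k z - F i k z) PF i j x)"
    by (simp add: PG_def PF_def mat_mult_diff)
  also have "\<dots> \<le> SN n a c (mat_mult n G (\<lambda>i k z. PG i k z - PF i k z))
                 + SN n a c (mat_mult n (\<lambda>i k z. G i k z - F i k z) PF)"
    by (rule SN_add[OF a])
  also have "\<dots> \<le> \<alpha> * (\<Sum>l<Suc k. \<alpha> ^ l * \<beta> ^ (Suc k - l - 1) * \<delta>) + \<delta> * \<beta> ^ Suc k"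
  proof (rule add_mono)
    show "SN n a c (mat_mult n G (\<lambda>i k z. PG i k z - PF i k z)) \<le> \<alpha> * (\<Sum>l<Suc k. \<alpha> ^ l * \<beta> ^ (Suc k - l - 1) * \<delta>)"
      by (rule order_trans[OF SN_mult[OF a]], rule mult_mono[OF G]) (use Suc.IH in \<open>auto simp: PG_def PF_def\<close>)
    show "SN n a c (mat_mult n (\<lambda>i k z. G i k z - F i k z) PF) \<le> \<delta> * \<beta> ^ Suc k"
      by (rule order_trans[OF SN_mult[OF a]], rule mult_mono[OF D])
         (use SN_prod_rep[OF a F] in \<open>auto simp: PF_def\<close>)
  qed
  also have "\<dots> = (\<Sum>l<Suc (Suc k). \<alpha> ^ l * \<beta> ^ (Suc (Suc k) - l - 1) * \<delta>)"
  proof -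
    have e1: "(\<Sum>l<Suc k. \<alpha> ^ Suc l * \<beta> ^ (Suc (Suc k) - Suc l - 1) * \<delta>) = \<alpha> * (\<Sum>l<Suc k. \<alpha> ^ l * \<beta> ^ (Suc k - l - 1) * \<delta>)"
      unfolding sum_distrib_left by (rule sum.cong[OF refl]) (simp add: mult_ac)
    show ?thesis
      by (subst sum.lessThan_Suc_shift) (simp only: e1, simp add: add.commute mult.commute)
  qed
  finally show ?case .
qed

definition good :: "nat \<Rightarrow> nat \<Rightarrow> ncpoly2 \<Rightarrow> bool" where
  "good n D T \<longleftrightarrow> (\<forall>u v. T (u, v) \<noteq> 0 \<longrightarrow> set u \<subseteq> {..<n} \<and> set v \<subseteq> {..<n} \<and> length u + length v \<le> D)"

definition mgood :: "nat \<Rightarrow> nat \<Rightarrow> tmat \<Rightarrow> bool" where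
  "mgood n D M \<longleftrightarrow> (\<forall>i k. good n D (M i k))"

lemma good_mono: "good n D T \<Longrightarrow> D \<le> D' \<Longrightarrow> good n D' T"
  unfolding good_def by force

lemma good_sum: "(\<And>j. j \<in> J \<Longrightarrow> good n D (F j)) \<Longrightarrow> good n D (\<lambda>x. \<Sum>j\<in>J. F j x)"
  unfolding good_def
proof (intro allI impI)
  fix u v assume h: "\<And>j. j \<in> J \<Longrightarrow> \<forall>u v. F j (u, v) \<noteq> 0 \<longrightarrow> set u \<subseteq> {..<n} \<and> set v \<subseteq> {..<n} \<and> length u + length v \<le> D"
    and nz: "(\<Sum>j\<in>J. F j (u, v)) \<noteq> 0"
  then obtain j where "j \<in> J" "F j (u, v) \<noteq> 0" by (meson sum.neutral)
  then show "set u \<subseteq> {..<n} \<and> set v \<subseteq> {..<n} \<and> length u + length v \<le> D" using h by blast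
qed

lemma good_diff: "good n D X \<Longrightarrow> good n D Y \<Longrightarrow> good n D (\<lambda>x. X x - Y x)"
  unfolding good_def by (metis diff_0_right diff_self)

lemma good_tmult:
  assumes X: "good n D1 X" and Y: "good n D2 Y"
  shows "good n (D1 + D2) (tmult X Y)"
  unfolding good_def
proof (intro allI impI)
  fix w1 w2 assume "tmult X Y (w1, w2) \<noteq> 0"
  then have "(\<Sum>i\<le>length w1. \<Sum>j\<le>length w2. X (take i w1, drop j w2) * Y (drop i w1, take j w2)) \<noteq> 0"
    unfolding tmult_def by simp
  then obtain i where i: "i \<in> {..length w1}" "(\<Sum>j\<le>length w2. X (take i w1, drop j w2) * Y (drop i w1, take j w2)) \<noteq> 0"
    by (meson sum.not_neutral_contains_not_neutral)
  then obtain j where j: "j \<in> {..length w2}" "X (take i w1, drop j w2) * Y (drop i w1, take j w2) \<noteq> 0"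
    by (meson sum.not_neutral_contains_not_neutral)
  have ij: "i \<le> length w1" "j \<le> length w2" using i j by auto
  have x: "X (take i w1, drop j w2) \<noteq> 0" and y: "Y (drop i w1, take j w2) \<noteq> 0" using j(2) by auto
  have sx: "set (take i w1) \<subseteq> {..<n} \<and> set (drop j w2) \<subseteq> {..<n} \<and> length (take i w1) + length (drop j w2) \<le> D1"
    using X x unfolding good_def by blast
  have sy: "set (drop i w1) \<subseteq> {..<n} \<and> set (take j w2) \<subseteq> {..<n} \<and> length (drop i w1) + length (take j w2) \<le> D2"
    using Y y unfolding good_def by blast
  have "set w1 \<subseteq> {..<n}" using sx sy by (metis append_take_drop_id set_append le_sup_iff)
  moreover have "set w2 \<subseteq> {..<n}" using sx sy by (metis append_take_drop_id set_append le_sup_iff)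
  moreover have "length w1 + length w2 \<le> D1 + D2"
  proof -
    have l1: "length (take i w1) + length (drop i w1) = length w1" by (metis length_append append_take_drop_id)
    have l2: "length (take j w2) + length (drop j w2) = length w2" by (metis length_append append_take_drop_id)
    have "length (take i w1) + length (drop j w2) \<le> D1" "length (drop i w1) + length (take j w2) \<le> D2"
      using sx sy by blast+
    then show ?thesis using l1 l2 by linarith
  qed
  ultimately show "set w1 \<subseteq> {..<n} \<and> set w2 \<subseteq> {..<n} \<and> length w1 + length w2 \<le> D1 + D2" by blast
qed

lemma mgood_mult: "mgood n D1 M \<Longrightarrow> mgood n D2 N \<Longrightarrow> mgood n (D1 + D2) (mat_mult n M N)"
  unfolding mgood_def mat_mult_def by (intro allI good_sum good_tmult) auto

lemma mgood_one: "mgood n 0 mat_one"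
  unfolding mgood_def mat_one_def good_def tone_def by auto

lemma mgood_rep: "mgood n D G \<Longrightarrow> mgood n (k * D) (foldr (mat_mult n) (replicate k G) mat_one)"
  by (induction k) (auto simp: mgood_one dest: mgood_mult)

lemma mgood_diff: "mgood n D M \<Longrightarrow> mgood n D N \<Longrightarrow> mgood n D (\<lambda>i k x. M i k x - N i k x)"
  unfolding mgood_def by (auto intro: good_diff)

lemma mgood_mono: "mgood n D M \<Longrightarrow> D \<le> D' \<Longrightarrow> mgood n D' M"
  unfolding mgood_def by (auto intro: good_mono)

lemma set_rot: "set (drop l w @ i # take l w) = insert i (set w)"
  by (metis Un_commute append_take_drop_id set_append set_simps(2) insert_is_Un Un_insert_right)

lemma mgood_JD:
  assumes "is_ncpoly n g" "\<And>q. g q \<noteq> 0 \<Longrightarrow> length q \<le> D"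
  shows "mgood n D (JD n (Sigma_op g))"
  unfolding mgood_def good_def JD_def ddiff_def cycD_def
proof (intro allI impI, simp only: split)
  fix i j u v
  assume "(\<Sum>l\<le>length (u @ j # v). Sigma_op g (drop l (u @ j # v) @ i # take l (u @ j # v))) \<noteq> 0"
  then obtain l where "Sigma_op g (drop l (u @ j # v) @ i # take l (u @ j # v)) \<noteq> 0"
    by (meson sum.not_neutral_contains_not_neutral)
  then have gz: "g (drop l (u @ j # v) @ i # take l (u @ j # v)) \<noteq> 0"
    by (auto simp: Sigma_op_def split: if_splits)
  then have "drop l (u @ j # v) @ i # take l (u @ j # v) \<in> supp g" by (simp add: supp_def)
  then have "set (drop l (u @ j # v) @ i # take l (u @ j # v)) \<subseteq> {..<n}"
    using assms(1) unfolding is_ncpoly_def by blast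
  then have "set u \<subseteq> {..<n} \<and> set v \<subseteq> {..<n}" by (simp only: set_rot) auto
  moreover have "length (drop l (u @ j # v) @ i # take l (u @ j # v)) \<le> D" using assms(2) gz by blast
  ultimately show "set u \<subseteq> {..<n} \<and> set v \<subseteq> {..<n} \<and> length u + length v \<le> D" by simp
qed

lemma goodD: "good n D T \<Longrightarrow> T (u, v) \<noteq> 0 \<Longrightarrow> set u \<subseteq> {..<n} \<and> set v \<subseteq> {..<n} \<and> length u + length v \<le> D"
  by (simp add: good_def)

lemma good_row_finite: "good n D T \<Longrightarrow> finite {v. T (w, v) \<noteq> 0}"
  by (rule finite_subset[OF _ finite_lists_length_le[of "{..<n}" D]]) (auto dest: goodD)

lemma good_col_finite: "good n D T \<Longrightarrow> finite {u. T (u, w) \<noteq> 0}"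
  by (rule finite_subset[OF _ finite_lists_length_le[of "{..<n}" D]]) (auto dest: goodD)

lemma ott_diff:
  assumes "good n D T1" "good n D T2"
  shows "one_tau_tau_one tau T1 w - one_tau_tau_one tau T2 w = one_tau_tau_one tau (\<lambda>x. T1 x - T2 x) w"
proof -
  define V where "V = {xs. set xs \<subseteq> {..<n} \<and> length xs \<le> D}"
  have fV: "finite V" unfolding V_def by (rule finite_lists_length_le) simp
  have r: "(\<Sum>v\<in>{v. T (w, v) \<noteq> 0}. T (w, v) * tau v) = (\<Sum>v\<in>V. T (w, v) * tau v)" if "good n D T" for T
    by (rule sum.mono_neutral_left[OF fV]) (auto simp: V_def dest!: goodD[OF that])
  have l: "(\<Sum>u\<in>{u. T (u, w) \<noteq> 0}. tau u * T (u, w)) = (\<Sum>u\<in>V. tau u * T (u, w))" if "good n D T" for T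
    by (rule sum.mono_neutral_left[OF fV]) (auto simp: V_def dest!: goodD[OF that])
  have gd: "good n D (\<lambda>x. T1 x - T2 x)" by (rule good_diff[OF assms])
  show ?thesis
    unfolding one_tau_tau_one_def r[OF assms(1)] r[OF assms(2)] l[OF assms(1)] l[OF assms(2)] r[OF gd] l[OF gd]
    by (simp add: sum_subtractf algebra_simps)
qed

lemma normA_nonneg: "A \<ge> 0 \<Longrightarrow> normA A P \<ge> 0"
  unfolding normA_def by (intro sum_nonneg) auto

lemma normA_II: "A \<ge> 0 \<Longrightarrow> ennreal (normA A P) \<le> II (\<lambda>w. ennreal (cmod (P w) * A ^ length w))"
proof (cases "finite (supp P)")
  case True
  assume A: "A \<ge> 0"
  have "ennreal (normA A P) = (\<Sum>w\<in>supp P. ennreal (cmod (P w) * A ^ length w))"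
    unfolding normA_def using A by (subst sum_ennreal) auto
  also have "\<dots> = II (\<lambda>w. ennreal (cmod (P w) * A ^ length w))"
    by (rule II_finite[symmetric, OF True]) (simp add: supp_def)
  finally show ?thesis by simp
next
  case False
  then show ?thesis by (simp add: normA_def)
qed

lemma ott_bound:
  assumes T: "good n D T" and A: "A \<ge> 0" and C0: "C0 \<ge> 0"
    and tau_bd: "\<And>q. set q \<subseteq> {..<n} \<Longrightarrow> cmod (tau q) \<le> C0 ^ length q"
  shows "ennreal (normA A (one_tau_tau_one tau T)) \<le> wN A C0 T + wN C0 A T"
proof -
  define P where "P = one_tau_tau_one tau T"
  have pw: "ennreal (cmod (P w) * A ^ length w) \<le>
      II (\<lambda>v. ennreal (cmod (T (w, v)) * wt A C0 (w, v))) + II (\<lambda>u. ennreal (cmod (T (u, w)) * wt C0 A (u, w)))" for w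
  proof -
    define R where "R = {v. T (w, v) \<noteq> 0}"
    define L where "L = {u. T (u, w) \<noteq> 0}"
    have fR: "finite R" unfolding R_def by (rule good_row_finite[OF T])
    have fL: "finite L" unfolding L_def by (rule good_col_finite[OF T])
    have "cmod (P w) \<le> cmod (\<Sum>v\<in>R. T (w, v) * tau v) + cmod (\<Sum>u\<in>L. tau u * T (u, w))"
      unfolding P_def one_tau_tau_one_def R_def L_def by (rule norm_triangle_ineq)
    also have "\<dots> \<le> (\<Sum>v\<in>R. cmod (T (w, v)) * C0 ^ length v) + (\<Sum>u\<in>L. C0 ^ length u * cmod (T (u, w)))"
    proof (rule add_mono)
      show "cmod (\<Sum>v\<in>R. T (w, v) * tau v) \<le> (\<Sum>v\<in>R. cmod (T (w, v)) * C0 ^ length v)"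
        apply (rule order_trans[OF norm_sum], rule sum_mono)
        apply (simp add: norm_mult)
        apply (rule mult_left_mono[OF tau_bd])
        using goodD[OF T] by (auto simp: R_def)
      show "cmod (\<Sum>u\<in>L. tau u * T (u, w)) \<le> (\<Sum>u\<in>L. C0 ^ length u * cmod (T (u, w)))"
        apply (rule order_trans[OF norm_sum], rule sum_mono)
        apply (simp add: norm_mult)
        apply (rule mult_right_mono[OF tau_bd])
        using goodD[OF T] by (auto simp: L_def)
    qed
    finally have "cmod (P w) \<le> (\<Sum>v\<in>R. cmod (T (w, v)) * C0 ^ length v) + (\<Sum>u\<in>L. C0 ^ length u * cmod (T (u, w)))" .
    then have "cmod (P w) * A ^ length w \<le> ((\<Sum>v\<in>R. cmod (T (w, v)) * C0 ^ length v) + (\<Sum>u\<in>L. C0 ^ length u * cmod (T (u, w)))) * A ^ length w"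
      by (rule mult_right_mono) (simp add: A)
    also have "\<dots> = (\<Sum>v\<in>R. cmod (T (w, v)) * wt A C0 (w, v)) + (\<Sum>u\<in>L. cmod (T (u, w)) * wt C0 A (u, w))"
      by (simp add: wt_def sum_distrib_right sum_distrib_left algebra_simps)
    finally have "cmod (P w) * A ^ length w \<le>
       (\<Sum>v\<in>R. cmod (T (w, v)) * wt A C0 (w, v)) + (\<Sum>u\<in>L. cmod (T (u, w)) * wt C0 A (u, w))" .
    then have "ennreal (cmod (P w) * A ^ length w) \<le>
       ennreal ((\<Sum>v\<in>R. cmod (T (w, v)) * wt A C0 (w, v)) + (\<Sum>u\<in>L. cmod (T (u, w)) * wt C0 A (u, w)))"
      by (rule ennreal_leI)
    also have "\<dots> = (\<Sum>v\<in>R. ennreal (cmod (T (w, v)) * wt A C0 (w, v))) + (\<Sum>u\<in>L. ennreal (cmod (T (u, w)) * wt C0 A (u, w)))"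
      using A C0 by (simp add: ennreal_plus[symmetric] sum_nonneg wt_nonneg sum_ennreal del: ennreal_plus)
    also have "\<dots> = II (\<lambda>v. ennreal (cmod (T (w, v)) * wt A C0 (w, v))) + II (\<lambda>u. ennreal (cmod (T (u, w)) * wt C0 A (u, w)))"
    proof -
      have "II (\<lambda>v. ennreal (cmod (T (w, v)) * wt A C0 (w, v))) = (\<Sum>v\<in>R. ennreal (cmod (T (w, v)) * wt A C0 (w, v)))"
        by (rule II_finite[OF fR]) (simp add: R_def)
      moreover have "II (\<lambda>u. ennreal (cmod (T (u, w)) * wt C0 A (u, w))) = (\<Sum>u\<in>L. ennreal (cmod (T (u, w)) * wt C0 A (u, w)))"
        by (rule II_finite[OF fL]) (simp add: L_def)
      ultimately show ?thesis by simp
    qed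
    finally show ?thesis .
  qed
  have "ennreal (normA A P) \<le> II (\<lambda>w. ennreal (cmod (P w) * A ^ length w))" by (rule normA_II[OF A])
  also have "\<dots> \<le> II (\<lambda>w. II (\<lambda>v. ennreal (cmod (T (w, v)) * wt A C0 (w, v))) + II (\<lambda>u. ennreal (cmod (T (u, w)) * wt C0 A (u, w))))"
    by (rule II_mono[OF pw])
  also have "\<dots> = wN A C0 T + wN C0 A T"
    unfolding II_add wN_def
    using II_pair[of "\<lambda>p. ennreal (cmod (T p) * wt A C0 p)"] II_pair2[of "\<lambda>p. ennreal (cmod (T p) * wt C0 A p)"]
    by simp
  finally show ?thesis by (simp add: P_def)
qed

definition GS :: "real \<Rightarrow> real \<Rightarrow> nat \<Rightarrow> real" where
  "GS a c K = (\<Sum>t<K. a ^ t * c ^ (K - 1 - t))"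

lemma split_count:
  assumes "a \<ge> 0" "c \<ge> 0"
  shows "(\<Sum>j<n. II (\<lambda>p. if fst p @ j # snd p = R then ennreal (wt a c p) else 0)) \<le> ennreal (GS a c (length R))"
proof -
  define Spl where "Spl = (\<lambda>t. (take t R, drop (Suc t) R)) ` {..<length R}"
  have inj: "inj_on (\<lambda>t. (take t R, drop (Suc t) R)) {..<length R}"
    apply (rule inj_onI)
    apply (drule arg_cong[where f="\<lambda>p. length (fst p)"])
    by simp
  have pw: "(\<Sum>j<n. (if fst p @ j # snd p = R then ennreal (wt a c p) else 0)) \<le> (if p \<in> Spl then ennreal (wt a c p) else 0)" for p
  proof (cases "\<exists>j. fst p @ j # snd p = R")
    case True
    then obtain j0 where j0: "fst p @ j0 # snd p = R" by blast
    have "p \<in> Spl"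
    proof -
      have "length (fst p) < length R" using j0 by auto
      moreover have "p = (take (length (fst p)) R, drop (Suc (length (fst p))) R)" using j0 by auto
      ultimately show ?thesis unfolding Spl_def by blast
    qed
    have "(\<Sum>j<n. (if fst p @ j # snd p = R then ennreal (wt a c p) else 0)) =
          (\<Sum>j<n. (if j = j0 then ennreal (wt a c p) else 0))"
      by (rule sum.cong[OF refl]) (use j0 in auto)
    also have "\<dots> \<le> ennreal (wt a c p)" by simp
    finally show ?thesis using \<open>p \<in> Spl\<close> by simp
  next
    case False
    then show ?thesis by simp
  qed
  have "(\<Sum>j<n. II (\<lambda>p. if fst p @ j # snd p = R then ennreal (wt a c p) else 0))
      = II (\<lambda>p. \<Sum>j<n. (if fst p @ j # snd p = R then ennreal (wt a c p) else 0))"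
    by (rule II_sum[symmetric])
  also have "\<dots> \<le> II (\<lambda>p. if p \<in> Spl then ennreal (wt a c p) else 0)"
    by (rule II_mono[OF pw])
  also have "\<dots> = (\<Sum>p\<in>Spl. if p \<in> Spl then ennreal (wt a c p) else 0)"
    by (rule II_finite) (auto simp: Spl_def)
  also have "\<dots> = (\<Sum>p\<in>Spl. ennreal (wt a c p))" by simp
  also have "\<dots> = (\<Sum>t<length R. ennreal (wt a c (take t R, drop (Suc t) R)))"
    unfolding Spl_def by (subst sum.reindex[OF inj]) simp
  also have "\<dots> = ennreal (\<Sum>t<length R. wt a c (take t R, drop (Suc t) R))"
    by (rule sum_ennreal) (simp add: wt_nonneg assms)
  also have "(\<Sum>t<length R. wt a c (take t R, drop (Suc t) R)) = GS a c (length R)"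
    unfolding GS_def wt_def by (rule sum.cong[OF refl]) auto
  finally show ?thesis .
qed

lemma rot_inv:
  assumes "drop l w @ i # take l w = q" "l \<le> length w"
  shows "length q = Suc (length w) \<and> w = drop (length q - l) q @ take (length q - 1 - l) q \<and> i = q ! (length q - 1 - l)"
proof -
  define d where "d = drop l w"
  define t where "t = take l w"
  have q: "q = d @ i # t" using assms(1) by (simp add: d_def t_def)
  have lt: "length t = l" using assms(2) by (simp add: t_def)
  have w: "w = t @ d" by (simp add: d_def t_def)
  have lq: "length q = Suc (length w)" using q w by simp
  have e1: "length q - l = Suc (length d)" using q lt by simp
  have e2: "length q - 1 - l = length d" using q lt by simp
  have "take (length q - 1 - l) q = d" unfolding e2 by (simp add: q)
  moreover have "drop (length q - l) q = t" unfolding e1 by (simp add: q)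
  moreover have "q ! (length q - 1 - l) = i" unfolding e2 by (simp add: q)
  ultimately show ?thesis using lq w by simp
qed

lemma rot_count_pw:
  fixes W :: ennreal
  shows "(\<Sum>l\<le>length w. if drop l w @ i # take l w = q then W else 0) \<le>
    (\<Sum>l<length q. if w = drop (length q - l) q @ take (length q - 1 - l) q \<and> i = q ! (length q - 1 - l) then W else 0)"
proof (cases "length q = Suc (length w)")
  case True
  have e: "{..length w} = {..<length q}" using True by auto
  show ?thesis unfolding e
  proof (rule sum_mono)
    fix l assume "l \<in> {..<length q}"
    then have l: "l \<le> length w" using True by simp
    show "(if drop l w @ i # take l w = q then W else 0) \<le>
       (if w = drop (length q - l) q @ take (length q - 1 - l) q \<and> i = q ! (length q - 1 - l) then W else 0)"
    proof (cases "drop l w @ i # take l w = q")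
      case True
      have Q: "w = drop (length q - l) q @ take (length q - 1 - l) q \<and> i = q ! (length q - 1 - l)"
        using rot_inv[OF True l] by blast
      show ?thesis by (simp only: if_P[OF True] if_P[OF Q] order_refl)
    qed simp
  qed
next
  case False
  have "(\<Sum>l\<le>length w. if drop l w @ i # take l w = q then W else 0) = 0"
  proof (rule sum.neutral, rule ballI)
    fix l assume "l \<in> {..length w}"
    then have l: "l \<le> length w" by simp
    show "(if drop l w @ i # take l w = q then W else 0) = 0"
    proof (cases "drop l w @ i # take l w = q")
      case True
      have "length q = Suc (length w)" using rot_inv[OF True l] by blast
      with False show ?thesis by blast
    qed simp
  qed
  then show ?thesis by simp
qed

lemma cnt_bound:
  assumes "a \<ge> 0" "c \<ge> 0"
  shows "(\<Sum>i<n. \<Sum>j<n. II (\<lambda>p. \<Sum>l\<le>length (fst p @ j # snd p).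
      if drop l (fst p @ j # snd p) @ i # take l (fst p @ j # snd p) = q then ennreal (wt a c p) else 0))
    \<le> of_nat (length q) * ennreal (GS a c (length q - 1))"
proof -
  define k where "k = length q"
  define R where "R l = drop (k - l) q @ take (k - 1 - l) q" for l
  define c' where "c' l = q ! (k - 1 - l)" for l
  have "(\<Sum>i<n. \<Sum>j<n. II (\<lambda>p. \<Sum>l\<le>length (fst p @ j # snd p).
      if drop l (fst p @ j # snd p) @ i # take l (fst p @ j # snd p) = q then ennreal (wt a c p) else 0))
    \<le> (\<Sum>i<n. \<Sum>j<n. II (\<lambda>p. \<Sum>l<k. if fst p @ j # snd p = R l \<and> i = c' l then ennreal (wt a c p) else 0))"
    unfolding k_def R_def c'_def by (intro sum_mono II_mono rot_count_pw)
  also have "\<dots> = (\<Sum>i<n. \<Sum>j<n. \<Sum>l<k. II (\<lambda>p. if fst p @ j # snd p = R l \<and> i = c' l then ennreal (wt a c p) else 0))"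
    by (simp only: II_sum)
  also have "\<dots> = (\<Sum>l<k. \<Sum>i<n. \<Sum>j<n. II (\<lambda>p. if fst p @ j # snd p = R l \<and> i = c' l then ennreal (wt a c p) else 0))"
  proof -
    have "(\<Sum>i<n. \<Sum>j<n. \<Sum>l<k. F i j l) = (\<Sum>l<k. \<Sum>i<n. \<Sum>j<n. F i j l)" for F :: "nat \<Rightarrow> nat \<Rightarrow> nat \<Rightarrow> ennreal"
    proof -
      have "(\<Sum>i<n. \<Sum>j<n. \<Sum>l<k. F i j l) = (\<Sum>i<n. \<Sum>l<k. \<Sum>j<n. F i j l)"
        by (rule sum.cong[OF refl], rule sum.swap)
      also have "\<dots> = (\<Sum>l<k. \<Sum>i<n. \<Sum>j<n. F i j l)" by (rule sum.swap)
      finally show ?thesis .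
    qed
    then show ?thesis .
  qed
  also have "\<dots> \<le> (\<Sum>l<k. ennreal (GS a c (k - 1)))"
  proof (rule sum_mono)
    fix l assume l: "l \<in> {..<k}"
    have "(\<Sum>i<n. \<Sum>j<n. II (\<lambda>p. if fst p @ j # snd p = R l \<and> i = c' l then ennreal (wt a c p) else 0))
        = (\<Sum>i<n. if i = c' l then (\<Sum>j<n. II (\<lambda>p. if fst p @ j # snd p = R l then ennreal (wt a c p) else 0)) else 0)"
      by (rule sum.cong[OF refl], case_tac "x = c' l") simp_all
    also have "\<dots> \<le> (\<Sum>j<n. II (\<lambda>p. if fst p @ j # snd p = R l then ennreal (wt a c p) else 0))"
      by simp
    also have "\<dots> \<le> ennreal (GS a c (length (R l)))"
      by (rule split_count[OF assms])
    also have "length (R l) = k - 1" using l by (simp add: R_def k_def)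
    finally show "(\<Sum>i<n. \<Sum>j<n. II (\<lambda>p. if fst p @ j # snd p = R l \<and> i = c' l then ennreal (wt a c p) else 0))
        \<le> ennreal (GS a c (k - 1))" .
  qed
  also have "\<dots> = of_nat k * ennreal (GS a c (k - 1))" by simp
  finally show ?thesis by (simp add: k_def)
qed

lemma JD_apply: "JD n P i j p = (\<Sum>l\<le>length (fst p @ j # snd p).
     P (drop l (fst p @ j # snd p) @ i # take l (fst p @ j # snd p)))"
  by (simp add: JD_def ddiff_def cycD_def split_beta)

lemma SN_JD_bound:
  assumes fin: "finite (supp P)" and a: "a \<ge> 0" "c \<ge> 0"
  shows "SN n a c (JD n P) \<le> (\<Sum>q\<in>supp P. ennreal (cmod (P q)) * (of_nat (length q) * ennreal (GS a c (length q - 1))))"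
proof -
  define S where "S = supp P"
  define e where "e q = ennreal (cmod (P q))" for q
  define Cn where "Cn i j q p = (\<Sum>l\<le>length (fst p @ j # snd p).
      if drop l (fst p @ j # snd p) @ i # take l (fst p @ j # snd p) = q then ennreal (wt a c p) else 0)" for i j q p
  have eS: "e x = (\<Sum>q\<in>S. if x = q then e q else 0)" for x
    using fin by (cases "x \<in> S") (auto simp: S_def e_def supp_def)
  have pw: "ennreal (cmod (JD n P i j p) * wt a c p) \<le> (\<Sum>q\<in>S. e q * Cn i j q p)" for i j p
  proof -
    define w where "w = fst p @ j # snd p"
    have "cmod (JD n P i j p) * wt a c p \<le> (\<Sum>l\<le>length w. cmod (P (drop l w @ i # take l w))) * wt a c p"
      unfolding JD_apply w_def[symmetric] by (rule mult_right_mono[OF norm_sum wt_nonneg[OF a]])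
    then have "ennreal (cmod (JD n P i j p) * wt a c p) \<le> ennreal ((\<Sum>l\<le>length w. cmod (P (drop l w @ i # take l w))) * wt a c p)"
      by (rule ennreal_leI)
    also have "\<dots> = (\<Sum>l\<le>length w. e (drop l w @ i # take l w) * ennreal (wt a c p))"
      unfolding e_def sum_distrib_right
      by (subst sum_ennreal[symmetric]) (auto simp: wt_nonneg[OF a] ennreal_mult)
    also have "\<dots> = (\<Sum>l\<le>length w. \<Sum>q\<in>S. e q * (if drop l w @ i # take l w = q then ennreal (wt a c p) else 0))"
      apply (rule sum.cong[OF refl])
      apply (subst eS)
      apply (simp only: sum_distrib_right)
      by (rule sum.cong[OF refl]) simp
    also have "\<dots> = (\<Sum>q\<in>S. e q * Cn i j q p)"
      unfolding Cn_def w_def[symmetric] sum_distrib_left by (rule sum.swap)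
    finally show ?thesis .
  qed
  have "SN n a c (JD n P) \<le> (\<Sum>i<n. \<Sum>j<n. II (\<lambda>p. \<Sum>q\<in>S. e q * Cn i j q p))"
    unfolding SN_def wN_def by (intro sum_mono II_mono pw)
  also have "\<dots> = (\<Sum>i<n. \<Sum>j<n. \<Sum>q\<in>S. e q * II (Cn i j q))"
    by (simp only: II_sum II_cmult)
  also have "\<dots> = (\<Sum>q\<in>S. e q * (\<Sum>i<n. \<Sum>j<n. II (Cn i j q)))"
  proof -
    have "(\<Sum>i<n. \<Sum>j<n. \<Sum>q\<in>S. F i j q) = (\<Sum>q\<in>S. \<Sum>i<n. \<Sum>j<n. F i j q)" for F :: "nat \<Rightarrow> nat \<Rightarrow> nat list \<Rightarrow> ennreal"
    proof -
      have "(\<Sum>i<n. \<Sum>j<n. \<Sum>q\<in>S. F i j q) = (\<Sum>i<n. \<Sum>q\<in>S. \<Sum>j<n. F i j q)"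
        by (rule sum.cong[OF refl], rule sum.swap)
      also have "\<dots> = (\<Sum>q\<in>S. \<Sum>i<n. \<Sum>j<n. F i j q)" by (rule sum.swap)
      finally show ?thesis .
    qed
    then show ?thesis by (simp only: sum_distrib_left)
  qed
  also have "\<dots> \<le> (\<Sum>q\<in>S. e q * (of_nat (length q) * ennreal (GS a c (length q - 1))))"
    unfolding Cn_def by (intro sum_mono mult_left_mono cnt_bound[OF a]) simp
  finally show ?thesis by (simp add: S_def e_def)
qed

lemma GS_Suc: "GS a c (Suc K) = a ^ K + c * GS a c K"
proof -
  have "GS a c (Suc K) = a ^ K + (\<Sum>t<K. a ^ t * c ^ (K - t))"
    unfolding GS_def by (simp add: add.commute)
  also have "(\<Sum>t<K. a ^ t * c ^ (K - t)) = c * GS a c K"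
    unfolding GS_def sum_distrib_left
    by (rule sum.cong[OF refl]) (simp add: Suc_diff_Suc power_Suc[symmetric] mult_ac del: power_Suc)
  finally show ?thesis .
qed

lemma GS_le:
  assumes "0 \<le> C0" "2 * C0 \<le> A" "A > 0"
  shows "A * GS A C0 K \<le> 2 * A ^ K"
proof (induction K)
  case 0
  then show ?case by (simp add: GS_def)
next
  case (Suc K)
  have "A * GS A C0 (Suc K) = A ^ Suc K + C0 * (A * GS A C0 K)"
    by (simp add: GS_Suc algebra_simps)
  also have "\<dots> \<le> A ^ Suc K + C0 * (2 * A ^ K)"
    using Suc.IH assms by (intro add_left_mono mult_left_mono) auto
  also have "\<dots> \<le> A ^ Suc K + A ^ Suc K"
    using assms by (simp add: mult.assoc[symmetric])
  finally show ?case by simp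
qed

lemma GS_sym: "GS a c K = GS c a K"
proof -
  have "GS c a K = (\<Sum>i<K. c ^ (K - Suc i) * a ^ (K - 1 - (K - Suc i)))"
    unfolding GS_def by (rule sum.nat_diff_reindex[symmetric])
  also have "\<dots> = GS a c K"
    unfolding GS_def by (rule sum.cong[OF refl]) (simp add: mult.commute)
  finally show ?thesis by simp
qed

lemma GS_nonneg: "a \<ge> 0 \<Longrightarrow> c \<ge> 0 \<Longrightarrow> GS a c K \<ge> 0"
  unfolding GS_def by (intro sum_nonneg) auto

lemma SN_JD_final:
  assumes fin: "finite (supp g)" and A: "A > 0" and C0: "0 \<le> C0" "2 * C0 \<le> A"
    and ac: "(a, c) = (A, C0) \<or> (a, c) = (C0, A)"
  shows "SN n a c (JD n (Sigma_op g)) \<le> ennreal (2 / A ^ 2 * normA A g)"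
proof -
  have a: "a \<ge> 0" "c \<ge> 0" using ac A C0 by auto
  have GSa: "GS a c K = GS A C0 K" for K using ac GS_sym by auto
  have sub: "supp (Sigma_op g) \<subseteq> supp g" by (auto simp: supp_def Sigma_op_def split: if_splits)
  have fin2: "finite (supp (Sigma_op g))" by (rule finite_subset[OF sub fin])
  have trm: "ennreal (cmod (Sigma_op g q)) * (of_nat (length q) * ennreal (GS a c (length q - 1)))
      \<le> ennreal (cmod (g q) * (2 / A ^ 2 * A ^ length q))" if q: "q \<in> supp (Sigma_op g)" for q
  proof -
    have qn: "q \<noteq> []" using q by (auto simp: supp_def Sigma_op_def)
    then have k: "length q \<ge> 1" by (cases q) auto
    have cq: "cmod (Sigma_op g q) * real (length q) = cmod (g q)"
      using qn by (simp add: Sigma_op_def norm_divide)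
    have G: "GS A C0 (length q - 1) \<le> 2 / A ^ 2 * A ^ length q"
    proof -
      have "A * GS A C0 (length q - 1) \<le> 2 * A ^ (length q - 1)" by (rule GS_le[OF C0 A])
      moreover have "A ^ length q = A * A ^ (length q - 1)" using k
        by (metis Suc_diff_le diff_Suc_1 power_Suc)
      ultimately have "A * GS A C0 (length q - 1) \<le> 2 * A ^ length q / A" using A by simp
      then have "GS A C0 (length q - 1) \<le> 2 * A ^ length q / A / A" using A
        by (simp add: field_simps)
      then show ?thesis by (simp add: power2_eq_square field_simps)
    qed
    have "ennreal (cmod (Sigma_op g q)) * (of_nat (length q) * ennreal (GS a c (length q - 1)))
        = ennreal (cmod (Sigma_op g q) * real (length q) * GS A C0 (length q - 1))"
      using a by (simp add: GSa ennreal_mult GS_nonneg C0 A[THEN less_imp_le] ennreal_of_nat_eq_real_of_nat mult.assoc)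
    also have "\<dots> \<le> ennreal (cmod (g q) * (2 / A ^ 2 * A ^ length q))"
      unfolding cq by (intro ennreal_leI mult_left_mono G) simp
    finally show ?thesis .
  qed
  have "SN n a c (JD n (Sigma_op g)) \<le> (\<Sum>q\<in>supp (Sigma_op g). ennreal (cmod (Sigma_op g q)) * (of_nat (length q) * ennreal (GS a c (length q - 1))))"
    by (rule SN_JD_bound[OF fin2 a])
  also have "\<dots> \<le> (\<Sum>q\<in>supp (Sigma_op g). ennreal (cmod (g q) * (2 / A ^ 2 * A ^ length q)))"
    by (rule sum_mono[OF trm])
  also have "\<dots> = ennreal (\<Sum>q\<in>supp (Sigma_op g). cmod (g q) * (2 / A ^ 2 * A ^ length q))"
    using A by (intro sum_ennreal) simp
  also have "\<dots> \<le> ennreal (\<Sum>q\<in>supp g. cmod (g q) * (2 / A ^ 2 * A ^ length q))"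
    using A by (intro ennreal_leI sum_mono2[OF fin sub]) simp
  also have "(\<Sum>q\<in>supp g. cmod (g q) * (2 / A ^ 2 * A ^ length q)) = 2 / A ^ 2 * normA A g"
    unfolding normA_def sum_distrib_left by (rule sum.cong[OF refl]) (simp add: mult_ac)
  finally show ?thesis .
qed

lemma wN_trace:
  assumes "a \<ge> 0" "c \<ge> 0"
  shows "wN a c (\<lambda>x. \<Sum>i<n. M i i x) \<le> SN n a c M"
  unfolding SN_def
  by (rule order_trans[OF wN_sum[OF assms]], rule sum_mono, rule member_le_sum) auto

lemma ennreal_sum_conv:
  assumes "r \<ge> 0" "x \<ge> 0" "y \<ge> 0" "z \<ge> 0"
  shows "(\<Sum>l<m. ennreal (r * x) ^ l * ennreal (r * y) ^ (m - l - 1) * ennreal (r * z))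
       = ennreal (r ^ m * (\<Sum>l<m. x ^ l * y ^ (m - l - 1) * z))"
proof -
  have "(\<Sum>l<m. ennreal (r * x) ^ l * ennreal (r * y) ^ (m - l - 1) * ennreal (r * z))
      = (\<Sum>l<m. ennreal (r ^ m * (x ^ l * y ^ (m - l - 1) * z)))"
  proof (rule sum.cong[OF refl])
    fix l assume "l \<in> {..<m}"
    then have e: "m = l + (m - l - 1) + 1" by simp
    have "r ^ m = r ^ l * r ^ (m - l - 1) * r" by (subst e) (simp add: power_add)
    then show "ennreal (r * x) ^ l * ennreal (r * y) ^ (m - l - 1) * ennreal (r * z) = ennreal (r ^ m * (x ^ l * y ^ (m - l - 1) * z))"
      using assms by (simp add: ennreal_power ennreal_mult[symmetric] power_mult_distrib mult_ac)
  qed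
  also have "\<dots> = ennreal (\<Sum>l<m. r ^ m * (x ^ l * y ^ (m - l - 1) * z))"
    using assms by (intro sum_ennreal) auto
  finally show ?thesis by (simp add: sum_distrib_left)
qed

lemma Sigma_op_diff: "Sigma_op (\<lambda>w. f w - g w) q = Sigma_op f q - Sigma_op g q"
  by (simp add: Sigma_op_def diff_divide_distrib)

lemma JD_diff: "JD n (Sigma_op g) i k x - JD n (Sigma_op f) i k x = - JD n (Sigma_op (\<lambda>w. f w - g w)) i k x"
  unfolding JD_apply Sigma_op_diff by (simp add: sum_subtractf)

lemma max_len: "finite (supp g) \<Longrightarrow> g q \<noteq> 0 \<Longrightarrow> length q \<le> Max (insert 0 (length ` supp g))"
  by (rule Max_ge) (auto simp: supp_def)

theorem mainTheorem9:
  fixes n m :: nat and tau :: "nat list \<Rightarrow> complex" and C0 A :: real and f g :: ncpoly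
  assumes tau_bd: "\<And>q. set q \<subseteq> {..<n} \<Longrightarrow> cmod (tau q) \<le> C0 ^ length q"
    and A: "A > 1" and CA: "C0 / A < 1 / 2"
    and m: "m \<ge> 1"
    and f: "is_ncpoly0 n f" and g: "is_ncpoly0 n g"
  shows "normA A (\<lambda>w. Qm n tau (replicate m (Sigma_op g)) w - Qm n tau (replicate m (Sigma_op f)) w)
           \<le> 2 * (2 / A ^ 2) ^ m *
             (\<Sum>k<m. normA A g ^ k * normA A f ^ (m - k - 1) * normA A (\<lambda>w. f w - g w))
       \<and> normA A (Qm n tau (replicate m (Sigma_op g))) \<le> 2 * (2 / A ^ 2) ^ m * normA A g ^ m"
proof (cases "n = 0")
  case True
  have Q0: "Qm 0 tau xs = (\<lambda>w. 0)" for xs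
    by (simp add: Qm_def one_tau_tau_one_def fun_eq_iff)
  have z: "normA A (\<lambda>w. 0) = 0" by (simp add: normA_def supp_def)
  have A0: "A \<ge> 0" using A by simp
  show ?thesis using True
    by (simp add: Q0 z normA_nonneg[OF A0] sum_nonneg)
next
  case False
  have A0: "A > 0" using A by simp
  have C0: "C0 \<ge> 0"
  proof -
    have "set [0::nat] \<subseteq> {..<n}" using False by simp
    from tau_bd[OF this] show ?thesis by (simp add: order_trans[OF norm_ge_zero])
  qed
  have C0A: "2 * C0 \<le> A" using CA A0 by (simp add: field_simps)
  have fing: "finite (supp g)" and finf: "finite (supp f)" using f g by (auto simp: is_ncpoly0_def is_ncpoly_def)
  have fingf: "finite (supp (\<lambda>w. f w - g w))"
    by (rule finite_subset[OF _ finite_UnI[OF fing finf]]) (auto simp: supp_def)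
  obtain k where mk: "m = Suc k" using m by (cases m) auto
  define r where "r = 2 / A ^ 2"
  have r0: "r \<ge> 0" by (simp add: r_def)
  define G where "G = JD n (Sigma_op g)"
  define F where "F = JD n (Sigma_op f)"
  define PG where "PG = foldr (mat_mult n) (replicate m G) mat_one"
  define PF where "PF = foldr (mat_mult n) (replicate m F) mat_one"
  define TG where "TG x = (\<Sum>i<n. PG i i x)" for x
  define TF where "TF x = (\<Sum>i<n. PF i i x)" for x
  have QG: "Qm n tau (replicate m (Sigma_op g)) = one_tau_tau_one tau TG"
    unfolding Qm_def TG_def PG_def G_def map_replicate by (rule refl)
  have QF: "Qm n tau (replicate m (Sigma_op f)) = one_tau_tau_one tau TF"
    unfolding Qm_def TF_def PF_def F_def map_replicate by (rule refl)
  define D where "D = Max (insert 0 (length ` supp g)) + Max (insert 0 (length ` supp f))"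
  have gG: "mgood n D G" unfolding G_def
    by (rule mgood_JD) (use g max_len[OF fing] in \<open>auto simp: is_ncpoly0_def D_def intro: le_add1[THEN order_trans] trans_le_add1\<close>)
  have gF: "mgood n D F" unfolding F_def
    by (rule mgood_JD) (use f max_len[OF finf] in \<open>auto simp: is_ncpoly0_def D_def intro: trans_le_add2\<close>)
  have gPG: "mgood n (m * D) PG" unfolding PG_def by (rule mgood_rep[OF gG])
  have gPF: "mgood n (m * D) PF" unfolding PF_def by (rule mgood_rep[OF gF])
  have gTG: "good n (m * D) TG" unfolding TG_def using gPG by (intro good_sum) (auto simp: mgood_def)
  have gTF: "good n (m * D) TF" unfolding TF_def using gPF by (intro good_sum) (auto simp: mgood_def)
  have ac1: "(A, C0) = (A, C0) \<or> (A, C0) = (C0, A)" and ac2: "(C0, A) = (A, C0) \<or> (C0, A) = (C0, A)" by simp_all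
  have SG: "SN n a c G \<le> ennreal (r * normA A g)" if "(a, c) = (A, C0) \<or> (a, c) = (C0, A)" for a c
    unfolding G_def r_def by (rule SN_JD_final[OF fing A0 C0 C0A that])
  have SF: "SN n a c F \<le> ennreal (r * normA A f)" if "(a, c) = (A, C0) \<or> (a, c) = (C0, A)" for a c
    unfolding F_def r_def by (rule SN_JD_final[OF finf A0 C0 C0A that])
  have SD: "SN n a c (\<lambda>i k x. G i k x - F i k x) \<le> ennreal (r * normA A (\<lambda>w. f w - g w))"
    if "(a, c) = (A, C0) \<or> (a, c) = (C0, A)" for a c
  proof -
    have "SN n a c (\<lambda>i k x. G i k x - F i k x) = SN n a c (JD n (Sigma_op (\<lambda>w. f w - g w)))"
      unfolding SN_def G_def F_def JD_diff wN_minus by simp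
    also have "\<dots> \<le> ennreal (r * normA A (\<lambda>w. f w - g w))"
      unfolding r_def by (rule SN_JD_final[OF fingf A0 C0 C0A that])
    finally show ?thesis .
  qed
  have anonneg: "a \<ge> 0 \<and> c \<ge> 0" if "(a, c) = (A, C0) \<or> (a, c) = (C0, A)" for a c
    using that A0 C0 by auto
  define S where "S = (\<Sum>l<m. normA A g ^ l * normA A f ^ (m - l - 1) * normA A (\<lambda>w. f w - g w))"
  have Snn: "S \<ge> 0" unfolding S_def using A0 by (intro sum_nonneg mult_nonneg_nonneg zero_le_power normA_nonneg) auto
  have SNd: "SN n a c (\<lambda>i j x. PG i j x - PF i j x) \<le> ennreal (r ^ m * S)"
    if ac: "(a, c) = (A, C0) \<or> (a, c) = (C0, A)" for a c
  proof -
    have "SN n a c (\<lambda>i j x. PG i j x - PF i j x)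
       \<le> (\<Sum>l<Suc k. ennreal (r * normA A g) ^ l * ennreal (r * normA A f) ^ (Suc k - l - 1) * ennreal (r * normA A (\<lambda>w. f w - g w)))"
      unfolding PG_def PF_def mk
      using SN_diff_rep[OF _ _ SG[OF ac] SF[OF ac] SD[OF ac]] anonneg[OF ac] by blast
    also have "\<dots> = ennreal (r ^ m * S)"
      unfolding S_def mk using A0 by (intro ennreal_sum_conv r0 normA_nonneg) auto
    finally show ?thesis .
  qed
  have part1: "normA A (\<lambda>w. Qm n tau (replicate m (Sigma_op g)) w - Qm n tau (replicate m (Sigma_op f)) w)
           \<le> 2 * (2 / A ^ 2) ^ m * S"
  proof -
    define Td where "Td x = TG x - TF x" for x
    have gTd: "good n (m * D) Td" unfolding Td_def by (rule good_diff[OF gTG gTF])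
    have eq: "(\<lambda>w. Qm n tau (replicate m (Sigma_op g)) w - Qm n tau (replicate m (Sigma_op f)) w) = one_tau_tau_one tau Td"
      unfolding QG QF Td_def by (rule ext, rule ott_diff[OF gTG gTF])
    have Tdt: "Td = (\<lambda>x. \<Sum>i<n. (\<lambda>i j x. PG i j x - PF i j x) i i x)"
      by (simp add: Td_def TG_def TF_def sum_subtractf fun_eq_iff)
    have w: "wN a c Td \<le> ennreal (r ^ m * S)" if ac: "(a, c) = (A, C0) \<or> (a, c) = (C0, A)" for a c
      unfolding Tdt using anonneg[OF ac] by (intro order_trans[OF wN_trace SNd[OF ac]]) auto
    have "ennreal (normA A (one_tau_tau_one tau Td)) \<le> wN A C0 Td + wN C0 A Td"
      by (rule ott_bound[OF gTd _ C0 tau_bd]) (use A0 in simp)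
    also have "\<dots> \<le> ennreal (r ^ m * S) + ennreal (r ^ m * S)"
      by (intro add_mono w ac1 ac2)
    also have "\<dots> = ennreal (2 * (2 / A ^ 2) ^ m * S)"
      using r0 Snn by (simp add: ennreal_plus[symmetric] r_def del: ennreal_plus)
    finally show ?thesis unfolding eq
      using r0 Snn by (subst (asm) ennreal_le_iff) (auto simp: r_def)
  qed
  have part2: "normA A (Qm n tau (replicate m (Sigma_op g))) \<le> 2 * (2 / A ^ 2) ^ m * normA A g ^ m"
  proof -
    have w: "wN a c TG \<le> ennreal ((r * normA A g) ^ m)" if ac: "(a, c) = (A, C0) \<or> (a, c) = (C0, A)" for a c
    proof -
      have "wN a c TG \<le> SN n a c PG"
        unfolding TG_def using anonneg[OF ac] by (intro wN_trace) auto
      also have "\<dots> \<le> ennreal (r * normA A g) ^ m"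
        unfolding PG_def mk using SN_prod_rep[OF _ _ SG[OF ac]] anonneg[OF ac] by blast
      also have "\<dots> = ennreal ((r * normA A g) ^ m)"
        using r0 A0 by (intro ennreal_power) (auto intro!: normA_nonneg mult_nonneg_nonneg)
      finally show ?thesis .
    qed
    have gn: "normA A g \<ge> 0" using A0 by (intro normA_nonneg) auto
    have "ennreal (normA A (one_tau_tau_one tau TG)) \<le> wN A C0 TG + wN C0 A TG"
      by (rule ott_bound[OF gTG _ C0 tau_bd]) (use A0 in simp)
    also have "\<dots> \<le> ennreal ((r * normA A g) ^ m) + ennreal ((r * normA A g) ^ m)"
      by (intro add_mono w ac1 ac2)
    also have "\<dots> = ennreal (2 * (2 / A ^ 2) ^ m * normA A g ^ m)"
    proof -
      have "(r * normA A g) ^ m = (2 / A ^ 2) ^ m * normA A g ^ m" by (simp only: power_mult_distrib r_def)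
      then show ?thesis using r0 gn by (simp add: ennreal_plus[symmetric] del: ennreal_plus)
    qed
    finally show ?thesis unfolding QG
      using r0 gn by (subst (asm) ennreal_le_iff) (auto simp: r_def)
  qed
  show ?thesis using part1 part2 by (simp add: S_def)
qed

end
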